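(* If a WCMDP is symmetric, then for every stationary Markov policy $\pi$ there exists a permutation invariant stationary Markov policy $\bar\pi$ such that \[ \mathbf{V}_0^{\bar\pi}=\Big(\frac1N\sum_{n=1}^N V^{\pi}_{0,n}\Big)\mathbf{1}, \] where $\mathbf{1}\in\mathbb{R}^N$ is the all-ones vector.
   Context: A WCMDP consists of $N$ sub-MDPs $n\in[N]$, each with finite state set $\mathcal{S}_n$, finite action set $\mathcal{A}_n$, transition kernel $p_n(s'|s,a)$ and reward $r_n(s,a)\in\mathbb{R}$, and a discount factor $\gamma\in[0,1)$. The joint state space is $\mathcal{S}^{(N)}=\prod_n\mathcal{S}_n$; the joint feasible action set is $\mathcal{A}^{(N)}=\{(a_1,\dots,a_N): a_n\in\mathcal{A}_n,\ \sum_{n=1}^N d_{k,n}(a_n)\le b_k\ \forall k\in[K]\}$ with $d_{k,n}\ge 0$, $b_k\ge0$, and an idle action consuming no resource. Joint transitions are $P^{(N)}(\mathbf{s}'|\mathbf{s},\mathbf{a})=\prod_{n}p_n(s'_n|s_n,a_n)$ and the vector reward is $\mathbf{r}(\mathbf{s},\mathbf{a})=(r_1(s_1,a_1),\dots,r_N(s_N,a_N))$. The initial joint state is drawn from a distribution $\boldsymbol{\mu}$ on $\mathcal{S}^{(N)}$. A stationary Markov policy $\pi$ gives probabilities $\pi(\mathbf{s},\mathbf{a})$ over $\mathbf{a}\in\mathcal{A}^{(N)}$ for each $\mathbf{s}$. The value vector is $\mathbf{V}_0^{\pi}=\mathbb{E}_{\pi}\big[\sum_{t\ge0}\gamma^t\mathbf{r}(\mathbf{s}_t,\mathbf{a}_t)\,\big|\,\mathbf{s}_0\sim\boldsymbol{\mu}\big]\in\mathbb{R}^N$,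 with components $V^{\pi}_{0,n}$. Permutations: for a permutation $\sigma$ of $[N]$, the permutation operator $Q$ acts on any $N$-tuple $\mathbf{v}$ by $(Q\mathbf{v})_n=v_{\sigma(n)}$; it acts in the same way on joint states and joint actions. $\mathcal{G}^N$ denotes the set of all $N!$ such operators. The WCMDP is symmetric if: (1) all sub-MDPs are identical ($\mathcal{S}_n=\mathcal{S}$, $\mathcal{A}_n=\mathcal{A}$, $p_n=p$, $r_n=r$ for all $n$); (2) resource consumption is symmetric ($d_{k,n}=d_k$ for all $n$); (3) $\boldsymbol{\mu}(\mathbf{s}_0)=\boldsymbol{\mu}(Q\mathbf{s}_0)$ for all $\mathbf{s}_0$ and all $Q\in\mathcal{G}^N$. A stationary Markov policy $\pi$ is permutation invariant if $\pi(\mathbf{s},\mathbf{a})=\pi(Q\mathbf{s},Q\mathbf{a})$ for all $Q\in\mathcal{G}^N$, $\mathbf{s}$, $\mathbf{a}$. *)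

theory Defs
  imports "HOL-Analysis.Analysis" "HOL-Combinatorics.Permutations"
begin

text \<open>A weakly coupled MDP. Sub-MDPs are indexed by n in {..<N} (i.e. 0..N-1),
  resource constraints by k in {..<K}.\<close>
record ('s, 'a) wcmdp =
  narms  :: nat
  nres   :: nat
  St     :: "nat \<Rightarrow> 's set"
  Ac     :: "nat \<Rightarrow> 'a set"
  trans  :: "nat \<Rightarrow> 's \<Rightarrow> 'a \<Rightarrow> 's \<Rightarrow> real"   (* p_n(s'|s,a) = trans n s a s' *)
  rew    :: "nat \<Rightarrow> 's \<Rightarrow> 'a \<Rightarrow> real"
  cons   :: "nat \<Rightarrow> nat \<Rightarrow> 'a \<Rightarrow> real"      (* d_{k,n}(a) = cons k n a *)
  budget :: "nat \<Rightarrow> real"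
  disc   :: real
  init   :: "(nat \<Rightarrow> 's) \<Rightarrow> real"

definition joint_states :: "('s,'a) wcmdp \<Rightarrow> (nat \<Rightarrow> 's) set" where
  "joint_states M = PiE {..<narms M} (St M)"

definition joint_actions :: "('s,'a) wcmdp \<Rightarrow> (nat \<Rightarrow> 'a) set" where
  "joint_actions M = {a \<in> PiE {..<narms M} (Ac M).
      \<forall>k<nres M. (\<Sum>n<narms M. cons M k n (a n)) \<le> budget M k}"

definition joint_trans :: "('s,'a) wcmdp \<Rightarrow> (nat \<Rightarrow> 's) \<Rightarrow> (nat \<Rightarrow> 'a) \<Rightarrow> (nat \<Rightarrow> 's) \<Rightarrow> real" where
  "joint_trans M s a s' = (\<Prod>n<narms M. trans M n (s n) (a n) (s' n))"

definition wf_wcmdp :: "('s,'a) wcmdp \<Rightarrow> bool" where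
  "wf_wcmdp M \<longleftrightarrow>
     (\<forall>n<narms M. finite (St M n) \<and> St M n \<noteq> {} \<and> finite (Ac M n) \<and> Ac M n \<noteq> {}) \<and>
     (\<forall>n<narms M. \<forall>s\<in>St M n. \<forall>a\<in>Ac M n.
         (\<forall>s'\<in>St M n. trans M n s a s' \<ge> 0) \<and> (\<Sum>s'\<in>St M n. trans M n s a s') = 1) \<and>
     (\<forall>k<nres M. \<forall>n<narms M. \<forall>a\<in>Ac M n. cons M k n a \<ge> 0) \<and>
     (\<forall>k<nres M. budget M k \<ge> 0) \<and>
     (\<forall>n<narms M. \<exists>idle\<in>Ac M n. \<forall>k<nres M. cons M k n idle = 0) \<and>
     0 \<le> disc M \<and> disc M < 1 \<and>
     (\<forall>s\<in>joint_states M. init M s \<ge> 0) \<and> (\<Sum>s\<in>joint_states M. init M s) = 1"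

definition permute :: "(nat \<Rightarrow> nat) \<Rightarrow> (nat \<Rightarrow> 'b) \<Rightarrow> (nat \<Rightarrow> 'b)" where
  "permute \<sigma> v = (\<lambda>n. v (\<sigma> n))"

definition symmetric_wcmdp :: "('s,'a) wcmdp \<Rightarrow> bool" where
  "symmetric_wcmdp M \<longleftrightarrow>
     (\<forall>n<narms M. St M n = St M 0 \<and> Ac M n = Ac M 0 \<and>
        (\<forall>s\<in>St M 0. \<forall>a\<in>Ac M 0. rew M n s a = rew M 0 s a \<and>
            (\<forall>s'\<in>St M 0. trans M n s a s' = trans M 0 s a s'))) \<and>
     (\<forall>k<nres M. \<forall>n<narms M. \<forall>a\<in>Ac M 0. cons M k n a = cons M k 0 a) \<and>
     (\<forall>\<sigma>. \<sigma> permutes {..<narms M} \<longrightarrow>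
        (\<forall>s\<in>joint_states M. init M s = init M (permute \<sigma> s)))"

definition is_policy :: "('s,'a) wcmdp \<Rightarrow> ((nat \<Rightarrow> 's) \<Rightarrow> (nat \<Rightarrow> 'a) \<Rightarrow> real) \<Rightarrow> bool" where
  "is_policy M \<pi> \<longleftrightarrow>
     (\<forall>s\<in>joint_states M.
        (\<forall>a. \<pi> s a \<ge> 0) \<and> (\<forall>a. a \<notin> joint_actions M \<longrightarrow> \<pi> s a = 0) \<and>
        (\<Sum>a\<in>joint_actions M. \<pi> s a) = 1)"

definition perm_invariant :: "('s,'a) wcmdp \<Rightarrow> ((nat \<Rightarrow> 's) \<Rightarrow> (nat \<Rightarrow> 'a) \<Rightarrow> real) \<Rightarrow> bool" where
  "perm_invariant M \<pi> \<longleftrightarrow>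
     (\<forall>\<sigma>. \<sigma> permutes {..<narms M} \<longrightarrow> (\<forall>s a. \<pi> s a = \<pi> (permute \<sigma> s) (permute \<sigma> a)))"

primrec state_dist :: "('s,'a) wcmdp \<Rightarrow> ((nat \<Rightarrow> 's) \<Rightarrow> (nat \<Rightarrow> 'a) \<Rightarrow> real) \<Rightarrow> nat \<Rightarrow> (nat \<Rightarrow> 's) \<Rightarrow> real" where
  "state_dist M \<pi> 0 = init M"
| "state_dist M \<pi> (Suc t) = (\<lambda>s'. \<Sum>s\<in>joint_states M. \<Sum>a\<in>joint_actions M.
        state_dist M \<pi> t s * \<pi> s a * joint_trans M s a s')"

definition value_vec :: "('s,'a) wcmdp \<Rightarrow> ((nat \<Rightarrow> 's) \<Rightarrow> (nat \<Rightarrow> 'a) \<Rightarrow> real) \<Rightarrow> nat \<Rightarrow> real" where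
  "value_vec M \<pi> n = (\<Sum>t. disc M ^ t * (\<Sum>s\<in>joint_states M. \<Sum>a\<in>joint_actions M.
        state_dist M \<pi> t s * \<pi> s a * rew M n (s n) (a n)))"

end

theory Submission imports Defs begin

lemma permute_comp: "permute \<sigma> (permute \<tau> s) = permute (\<tau> \<circ> \<sigma>) s"
  by (simp add: permute_def)

lemma permute_inv_l: "\<sigma> permutes S \<Longrightarrow> permute (inv \<sigma>) (permute \<sigma> s) = s"
  by (simp add: permute_def permutes_inverses(1))

lemma permute_inv_r: "\<sigma> permutes S \<Longrightarrow> permute \<sigma> (permute (inv \<sigma>) s) = s"
  by (simp add: permute_def permutes_inverses(2))

lemma sum_perm: "p permutes S \<Longrightarrow> (\<Sum>x\<in>S. g (p x)) = (\<Sum>x\<in>S. g x)"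
  using sum.permute[of p S g] by (simp only: o_def)
lemma prod_perm: "p permutes S \<Longrightarrow> (\<Prod>x\<in>S. g (p x)) = (\<Prod>x\<in>S. g x)"
  using prod.permute[of p S g] by (simp only: o_def)

locale symw =
  fixes M :: "('s,'a) wcmdp"
  assumes wf: "wf_wcmdp M" and sym: "symmetric_wcmdp M"
begin

abbreviation "N \<equiv> narms M"
abbreviation "JS \<equiv> joint_states M"
abbreviation "JA \<equiv> joint_actions M"
abbreviation "P \<equiv> joint_trans M"
abbreviation "\<gamma> \<equiv> disc M"

lemma St_sym: "n < N \<Longrightarrow> St M n = St M 0" using sym unfolding symmetric_wcmdp_def by blast
lemma Ac_sym: "n < N \<Longrightarrow> Ac M n = Ac M 0" using sym unfolding symmetric_wcmdp_def by blast
lemma rew_sym: "n < N \<Longrightarrow> x \<in> St M 0 \<Longrightarrow> y \<in> Ac M 0 \<Longrightarrow> rew M n x y = rew M 0 x y"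
  using sym unfolding symmetric_wcmdp_def by blast
lemma trans_sym: "n < N \<Longrightarrow> x \<in> St M 0 \<Longrightarrow> y \<in> Ac M 0 \<Longrightarrow> z \<in> St M 0 \<Longrightarrow> trans M n x y z = trans M 0 x y z"
  using sym unfolding symmetric_wcmdp_def by blast
lemma cons_sym: "k < nres M \<Longrightarrow> n < N \<Longrightarrow> y \<in> Ac M 0 \<Longrightarrow> cons M k n y = cons M k 0 y"
  using sym unfolding symmetric_wcmdp_def by blast
lemma init_sym: "\<sigma> permutes {..<N} \<Longrightarrow> s \<in> JS \<Longrightarrow> init M (permute \<sigma> s) = init M s"
  using sym unfolding symmetric_wcmdp_def by metis

lemma gamma: "0 \<le> \<gamma>" "\<gamma> < 1" using wf unfolding wf_wcmdp_def by auto

lemma finite_JS: "finite JS"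
  using wf unfolding wf_wcmdp_def joint_states_def by (auto intro!: finite_PiE)

lemma finite_JA: "finite JA"
proof -
  have "finite (PiE {..<N} (Ac M))" using wf unfolding wf_wcmdp_def by (auto intro!: finite_PiE)
  then show ?thesis unfolding joint_actions_def by auto
qed

lemma JA_ne: "JA \<noteq> {}"
proof -
  have "\<forall>n<N. \<exists>i\<in>Ac M n. \<forall>k<nres M. cons M k n i = 0" using wf unfolding wf_wcmdp_def by blast
  then obtain f where f: "\<And>n. n < N \<Longrightarrow> f n \<in> Ac M n \<and> (\<forall>k<nres M. cons M k n (f n) = 0)" by metis
  define a where "a = (\<lambda>n. if n < N then f n else undefined)"
  have "a \<in> PiE {..<N} (Ac M)" using f unfolding a_def by (simp add: PiE_iff extensional_def)
  moreover have "\<forall>k<nres M. (\<Sum>n<N. cons M k n (a n)) \<le> budget M k"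
    using f wf unfolding a_def wf_wcmdp_def by auto
  ultimately show ?thesis unfolding joint_actions_def by auto
qed

lemma JS_mem: "s \<in> JS \<Longrightarrow> n < N \<Longrightarrow> s n \<in> St M n"
  unfolding joint_states_def by auto
lemma JA_mem: "a \<in> JA \<Longrightarrow> n < N \<Longrightarrow> a n \<in> Ac M n"
  unfolding joint_actions_def by auto

lemma perm_lt: "\<sigma> permutes {..<N} \<Longrightarrow> n < N \<Longrightarrow> \<sigma> n < N"
  using permutes_in_image by fastforce
lemma perm_ge: "\<sigma> permutes {..<N} \<Longrightarrow> \<not> n < N \<Longrightarrow> \<sigma> n = n"
  by (auto simp: permutes_def)

lemma JS_perm: assumes "\<sigma> permutes {..<N}" "s \<in> JS" shows "permute \<sigma> s \<in> JS"
  unfolding joint_states_def PiE_iff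
proof (intro conjI ballI)
  fix n assume "n \<in> {..<N}"
  then have "n < N" "\<sigma> n < N" using perm_lt[OF assms(1)] by auto
  moreover have "s (\<sigma> n) \<in> St M (\<sigma> n)"
    using assms(2) \<open>\<sigma> n < N\<close> unfolding joint_states_def PiE_iff by auto
  ultimately show "permute \<sigma> s n \<in> St M n"
    using St_sym unfolding permute_def by metis
next
  show "permute \<sigma> s \<in> extensional {..<N}"
    using assms(2) perm_ge[OF assms(1)] unfolding joint_states_def PiE_iff extensional_def permute_def
    by auto
qed

lemma JA_perm: assumes "\<sigma> permutes {..<N}" "a \<in> JA" shows "permute \<sigma> a \<in> JA"
proof -
  have lt: "\<sigma> n < N" if "n < N" for n using perm_lt[OF assms(1)] that by auto
  have "permute \<sigma> a \<in> PiE {..<N} (Ac M)"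
    unfolding PiE_iff
  proof (intro conjI ballI)
    fix n assume "n \<in> {..<N}"
    then have "n < N" "\<sigma> n < N" using perm_lt[OF assms(1)] by auto
    moreover have "a (\<sigma> n) \<in> Ac M (\<sigma> n)"
      using JA_mem[OF assms(2) \<open>\<sigma> n < N\<close>] .
    ultimately show "permute \<sigma> a n \<in> Ac M n"
      using Ac_sym unfolding permute_def by metis
  next
    show "permute \<sigma> a \<in> extensional {..<N}"
      using assms(2) perm_ge[OF assms(1)] unfolding joint_actions_def PiE_iff extensional_def permute_def
      by auto
  qed
  moreover have "(\<Sum>n<N. cons M k n (permute \<sigma> a n)) \<le> budget M k" if k: "k < nres M" for k
  proof -
    have aA: "a n \<in> Ac M 0" if "n < N" for n using JA_mem[OF assms(2) that] Ac_sym[OF that] by simp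
    have "(\<Sum>n<N. cons M k n (permute \<sigma> a n)) = (\<Sum>n<N. cons M k 0 (a (\<sigma> n)))"
    proof (rule sum.cong[OF refl])
      fix n assume "n \<in> {..<N}"
      then have "n < N" "\<sigma> n < N" using lt by auto
      then show "cons M k n (permute \<sigma> a n) = cons M k 0 (a (\<sigma> n))"
        using cons_sym[OF k \<open>n < N\<close> aA[OF \<open>\<sigma> n < N\<close>]] by (simp add: permute_def)
    qed
    also have "\<dots> = (\<Sum>n<N. cons M k 0 (a n))"
      by (rule sum_perm[OF assms(1)])
    also have "\<dots> = (\<Sum>n<N. cons M k n (a n))"
    proof (rule sum.cong[OF refl])
      fix n assume "n \<in> {..<N}"
      then have "n < N" by auto
      then show "cons M k 0 (a n) = cons M k n (a n)"
        using cons_sym[OF k \<open>n < N\<close> aA[OF \<open>n < N\<close>]] by simp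
    qed
    also have "\<dots> \<le> budget M k" using assms(2) k unfolding joint_actions_def by auto
    finally show ?thesis .
  qed
  ultimately show ?thesis unfolding joint_actions_def by auto
qed

lemma sum_JS_perm: assumes "\<sigma> permutes {..<N}"
  shows "(\<Sum>s\<in>JS. g (permute \<sigma> s)) = (\<Sum>s\<in>JS. g s)"
  by (rule sum.reindex_bij_witness[where i="permute (inv \<sigma>)" and j="permute \<sigma>"])
     (use assms permute_inv_l permute_inv_r JS_perm JS_perm[OF permutes_inv[OF assms]] in auto)

lemma sum_JA_perm: assumes "\<sigma> permutes {..<N}"
  shows "(\<Sum>a\<in>JA. g (permute \<sigma> a)) = (\<Sum>a\<in>JA. g a)"
  by (rule sum.reindex_bij_witness[where i="permute (inv \<sigma>)" and j="permute \<sigma>"])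
     (use assms permute_inv_l permute_inv_r JA_perm JA_perm[OF permutes_inv[OF assms]] in auto)

lemma JS_perm_iff: assumes "\<sigma> permutes {..<N}" shows "permute \<sigma> s \<in> JS \<longleftrightarrow> s \<in> JS"
  using JS_perm[OF assms] JS_perm[OF permutes_inv[OF assms], of "permute \<sigma> s"] permute_inv_l[OF assms]
  by metis

lemma JA_perm_iff: assumes "\<sigma> permutes {..<N}" shows "permute \<sigma> a \<in> JA \<longleftrightarrow> a \<in> JA"
  using JA_perm[OF assms] JA_perm[OF permutes_inv[OF assms], of "permute \<sigma> a"] permute_inv_l[OF assms]
  by metis

lemma P_nonneg: "s \<in> JS \<Longrightarrow> a \<in> JA \<Longrightarrow> s' \<in> JS \<Longrightarrow> P s a s' \<ge> 0"
  using wf JS_mem JA_mem unfolding wf_wcmdp_def joint_trans_def by (auto intro!: prod_nonneg)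

lemma P_sum: assumes "s \<in> JS" "a \<in> JA" shows "(\<Sum>s'\<in>JS. P s a s') = 1"
proof -
  have "(\<Sum>s'\<in>JS. P s a s') = (\<Prod>n<N. \<Sum>y\<in>St M n. trans M n (s n) (a n) y)"
    unfolding joint_trans_def joint_states_def
    by (rule prod_sum_PiE[symmetric]) (use wf in \<open>auto simp: wf_wcmdp_def\<close>)
  also have "\<dots> = 1"
  proof (rule prod.neutral, rule ballI)
    fix n assume "n \<in> {..<N}"
    then have n: "n < N" by simp
    have "\<forall>n<N. \<forall>s\<in>St M n. \<forall>a\<in>Ac M n. (\<Sum>s'\<in>St M n. trans M n s a s') = 1"
      using wf unfolding wf_wcmdp_def by blast
    then show "(\<Sum>y\<in>St M n. trans M n (s n) (a n) y) = 1"
      using n JS_mem[OF assms(1) n] JA_mem[OF assms(2) n] by blast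
  qed
  finally show ?thesis .
qed

lemma P_perm: assumes "\<sigma> permutes {..<N}" "s \<in> JS" "a \<in> JA" "s' \<in> JS"
  shows "P (permute \<sigma> s) (permute \<sigma> a) (permute \<sigma> s') = P s a s'"
proof -
  have lt: "\<sigma> n < N" if "n < N" for n using perm_lt[OF assms(1)] that by auto
  have m: "s n \<in> St M 0" "a n \<in> Ac M 0" "s' n \<in> St M 0" if "n < N" for n
    using JS_mem[OF assms(2) that] JA_mem[OF assms(3) that] JS_mem[OF assms(4) that]
      St_sym[OF that] Ac_sym[OF that] by auto
  have "P (permute \<sigma> s) (permute \<sigma> a) (permute \<sigma> s') = (\<Prod>n<N. trans M 0 (s (\<sigma> n)) (a (\<sigma> n)) (s' (\<sigma> n)))"
  proof (unfold joint_trans_def permute_def, rule prod.cong[OF refl])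
    fix n assume "n \<in> {..<N}"
    then have "n < N" "\<sigma> n < N" using lt by auto
    then show "trans M n (s (\<sigma> n)) (a (\<sigma> n)) (s' (\<sigma> n)) = trans M 0 (s (\<sigma> n)) (a (\<sigma> n)) (s' (\<sigma> n))"
      using trans_sym[OF \<open>n < N\<close> m[OF \<open>\<sigma> n < N\<close>]] by simp
  qed
  also have "\<dots> = (\<Prod>n<N. trans M 0 (s n) (a n) (s' n))"
    by (rule prod_perm[OF assms(1)])
  also have "\<dots> = P s a s'"
  proof (unfold joint_trans_def, rule prod.cong[OF refl])
    fix n assume "n \<in> {..<N}"
    then have "n < N" using lt by auto
    then show "trans M 0 (s n) (a n) (s' n) = trans M n (s n) (a n) (s' n)"
      using trans_sym[OF \<open>n < N\<close> m[OF \<open>n < N\<close>]] by simp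
  qed
  finally show ?thesis .
qed

lemma init_nonneg: "s \<in> JS \<Longrightarrow> init M s \<ge> 0" using wf unfolding wf_wcmdp_def by auto
lemma init_sum: "(\<Sum>s\<in>JS. init M s) = 1" using wf unfolding wf_wcmdp_def by auto


lemma pol_nonneg: "is_policy M p \<Longrightarrow> s \<in> JS \<Longrightarrow> p s a \<ge> 0"
  unfolding is_policy_def by auto
lemma pol_sum: "is_policy M p \<Longrightarrow> s \<in> JS \<Longrightarrow> (\<Sum>a\<in>JA. p s a) = 1"
  unfolding is_policy_def by auto

lemma swap3: "(\<Sum>s'\<in>JS. \<Sum>s\<in>JS. \<Sum>a\<in>JA. g s' s a) = (\<Sum>s\<in>JS. \<Sum>a\<in>JA. \<Sum>s'\<in>JS. g s' s a)"
proof -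
  have "(\<Sum>s'\<in>JS. \<Sum>s\<in>JS. \<Sum>a\<in>JA. g s' s a) = (\<Sum>s\<in>JS. \<Sum>s'\<in>JS. \<Sum>a\<in>JA. g s' s a)"
    by (rule sum.swap)
  also have "\<dots> = (\<Sum>s\<in>JS. \<Sum>a\<in>JA. \<Sum>s'\<in>JS. g s' s a)"
    by (rule sum.cong[OF refl], rule sum.swap)
  finally show ?thesis .
qed

lemma stoch_sum: assumes "is_policy M p" "\<And>s. s \<in> JS \<Longrightarrow> f s \<ge> 0"
  shows "(\<Sum>s'\<in>JS. \<Sum>s\<in>JS. \<Sum>a\<in>JA. f s * p s a * P s a s') = (\<Sum>s\<in>JS. f s)"
proof -
  have "(\<Sum>s'\<in>JS. \<Sum>s\<in>JS. \<Sum>a\<in>JA. f s * p s a * P s a s')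
      = (\<Sum>s\<in>JS. \<Sum>a\<in>JA. \<Sum>s'\<in>JS. f s * p s a * P s a s')" by (rule swap3)
  also have "\<dots> = (\<Sum>s\<in>JS. \<Sum>a\<in>JA. f s * p s a * (\<Sum>s'\<in>JS. P s a s'))"
    by (simp add: sum_distrib_left)
  also have "\<dots> = (\<Sum>s\<in>JS. \<Sum>a\<in>JA. f s * p s a)"
    using P_sum by (intro sum.cong) auto
  also have "\<dots> = (\<Sum>s\<in>JS. f s * (\<Sum>a\<in>JA. p s a))"
    by (simp add: sum_distrib_left)
  also have "\<dots> = (\<Sum>s\<in>JS. f s)"
    using pol_sum[OF assms(1)] by (intro sum.cong) auto
  finally show ?thesis .
qed

lemma sd_props: assumes "is_policy M p"
  shows "(\<forall>s\<in>JS. state_dist M p t s \<ge> 0) \<and> (\<Sum>s\<in>JS. state_dist M p t s) = 1"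
proof (induction t)
  case 0
  then show ?case using init_nonneg init_sum by simp
next
  case (Suc t)
  have "state_dist M p (Suc t) s' \<ge> 0" if "s' \<in> JS" for s'
    using Suc pol_nonneg[OF assms] P_nonneg that
    by (auto intro!: sum_nonneg mult_nonneg_nonneg)
  moreover have "(\<Sum>s'\<in>JS. state_dist M p (Suc t) s') = 1"
    using stoch_sum[OF assms, of "state_dist M p t"] Suc by simp
  ultimately show ?case by blast
qed

lemma sd_nonneg: "is_policy M p \<Longrightarrow> s \<in> JS \<Longrightarrow> state_dist M p t s \<ge> 0"
  using sd_props by blast
lemma sd_le1: assumes "is_policy M p" "s \<in> JS" shows "state_dist M p t s \<le> 1"
proof -
  have "state_dist M p t s \<le> (\<Sum>s\<in>JS. state_dist M p t s)"
    by (rule member_le_sum) (use assms sd_nonneg finite_JS in auto)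
  then show ?thesis using sd_props[OF assms(1)] by simp
qed

definition occ :: "((nat \<Rightarrow> 's) \<Rightarrow> (nat \<Rightarrow> 'a) \<Rightarrow> real) \<Rightarrow> (nat \<Rightarrow> 's) \<Rightarrow> real" where
  "occ p s = (\<Sum>t. \<gamma> ^ t * state_dist M p t s)"

lemma occ_summable: assumes "is_policy M p" "s \<in> JS"
  shows "summable (\<lambda>t. \<gamma> ^ t * state_dist M p t s)"
proof (rule summable_comparison_test)
  show "\<exists>N0. \<forall>n\<ge>N0. norm (\<gamma> ^ n * state_dist M p n s) \<le> \<gamma> ^ n"
    using sd_nonneg[OF assms] sd_le1[OF assms] gamma
    by (auto simp: abs_mult intro!: mult_left_le)
  show "summable (\<lambda>n. \<gamma> ^ n)" using gamma by (intro summable_geometric) auto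
qed

lemma occ_nonneg: "is_policy M p \<Longrightarrow> s \<in> JS \<Longrightarrow> occ p s \<ge> 0"
  unfolding occ_def using gamma
  by (intro suminf_nonneg occ_summable) (auto intro!: mult_nonneg_nonneg sd_nonneg)

end

lemma interchange:
  fixes h :: "nat \<Rightarrow> 'x \<Rightarrow> real"
  assumes "\<And>s. s \<in> S \<Longrightarrow> summable (\<lambda>t. h t s)"
  shows "(\<Sum>t. \<Sum>s\<in>S. \<Sum>a\<in>A. h t s * c s a) = (\<Sum>s\<in>S. \<Sum>a\<in>A. (\<Sum>t. h t s) * c s a)"
    and "summable (\<lambda>t. \<Sum>s\<in>S. \<Sum>a\<in>A. h t s * c s a)"
proof -
  have sm: "summable (\<lambda>t. h t s * c s a)" if "s \<in> S" for s a
    using assms[OF that] by (rule summable_mult2)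
  have "(\<Sum>t. \<Sum>s\<in>S. \<Sum>a\<in>A. h t s * c s a) = (\<Sum>s\<in>S. \<Sum>t. \<Sum>a\<in>A. h t s * c s a)"
    by (rule suminf_sum) (use sm in \<open>auto intro!: summable_sum\<close>)
  also have "\<dots> = (\<Sum>s\<in>S. \<Sum>a\<in>A. \<Sum>t. h t s * c s a)"
    by (rule sum.cong[OF refl], rule suminf_sum) (use sm in auto)
  also have "\<dots> = (\<Sum>s\<in>S. \<Sum>a\<in>A. (\<Sum>t. h t s) * c s a)"
    using suminf_mult2[OF assms] by simp
  finally show "(\<Sum>t. \<Sum>s\<in>S. \<Sum>a\<in>A. h t s * c s a) = (\<Sum>s\<in>S. \<Sum>a\<in>A. (\<Sum>t. h t s) * c s a)" .
  show "summable (\<lambda>t. \<Sum>s\<in>S. \<Sum>a\<in>A. h t s * c s a)"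
    using sm by (auto intro!: summable_sum)
qed

context symw begin

lemma value_occ: assumes "is_policy M p"
  shows "value_vec M p n = (\<Sum>s\<in>JS. \<Sum>a\<in>JA. occ p s * (p s a * rew M n (s n) (a n)))"
proof -
  have "value_vec M p n = (\<Sum>t. \<Sum>s\<in>JS. \<Sum>a\<in>JA. (\<gamma> ^ t * state_dist M p t s) * (p s a * rew M n (s n) (a n)))"
    unfolding value_vec_def by (simp add: sum_distrib_left mult_ac)
  also have "\<dots> = (\<Sum>s\<in>JS. \<Sum>a\<in>JA. occ p s * (p s a * rew M n (s n) (a n)))"
    unfolding occ_def by (rule interchange(1)) (use occ_summable[OF assms] in auto)
  finally show ?thesis .
qed

lemma occ_flow: assumes "is_policy M p" "s' \<in> JS"
  shows "occ p s' = init M s' + \<gamma> * (\<Sum>s\<in>JS. \<Sum>a\<in>JA. occ p s * (p s a * P s a s'))"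
proof -
  let ?f = "\<lambda>t. \<gamma> ^ t * state_dist M p t s'"
  let ?X = "\<lambda>t. \<Sum>s\<in>JS. \<Sum>a\<in>JA. (\<gamma> ^ t * state_dist M p t s) * (p s a * P s a s')"
  have sX: "summable ?X" by (rule interchange(2)) (use occ_summable[OF assms(1)] in auto)
  have fs: "?f (Suc t) = \<gamma> * ?X t" for t
    by (simp add: sum_distrib_left mult_ac)
  have "occ p s' = ?f 0 + (\<Sum>t. ?f (Suc t))"
    unfolding occ_def using suminf_split_head[OF occ_summable[OF assms]] by simp
  also have "(\<Sum>t. ?f (Suc t)) = (\<Sum>t. \<gamma> * ?X t)" by (rule arg_cong[where f=suminf], rule ext, rule fs)
  also have "\<dots> = \<gamma> * (\<Sum>t. ?X t)" using suminf_mult[OF sX] by simp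
  also have "(\<Sum>t. ?X t) = (\<Sum>s\<in>JS. \<Sum>a\<in>JA. occ p s * (p s a * P s a s'))"
    unfolding occ_def by (rule interchange(1)) (use occ_summable[OF assms(1)] in auto)
  finally show ?thesis by simp
qed

lemma uniq: assumes q: "is_policy M q"
  and u: "\<And>s'. s' \<in> JS \<Longrightarrow> u s' = init M s' + \<gamma> * (\<Sum>s\<in>JS. \<Sum>a\<in>JA. u s * (q s a * P s a s'))"
  and v: "\<And>s'. s' \<in> JS \<Longrightarrow> v s' = init M s' + \<gamma> * (\<Sum>s\<in>JS. \<Sum>a\<in>JA. v s * (q s a * P s a s'))"
  and s0: "s0 \<in> JS"
  shows "u s0 = v s0"
proof -
  define e where "e s = u s - v s" for s
  have e: "e s' = \<gamma> * (\<Sum>s\<in>JS. \<Sum>a\<in>JA. e s * (q s a * P s a s'))" if "s' \<in> JS" for s'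
    unfolding e_def using u[OF that] v[OF that]
    by (simp add: sum_subtractf left_diff_distrib right_diff_distrib)
  have ea: "\<bar>e s'\<bar> \<le> \<gamma> * (\<Sum>s\<in>JS. \<Sum>a\<in>JA. \<bar>e s\<bar> * q s a * P s a s')" if s': "s' \<in> JS" for s'
  proof -
    have "\<bar>e s'\<bar> = \<gamma> * \<bar>\<Sum>s\<in>JS. \<Sum>a\<in>JA. e s * (q s a * P s a s')\<bar>"
      using e[OF s'] gamma by (simp add: abs_mult)
    also have "\<bar>\<Sum>s\<in>JS. \<Sum>a\<in>JA. e s * (q s a * P s a s')\<bar> \<le> (\<Sum>s\<in>JS. \<bar>\<Sum>a\<in>JA. e s * (q s a * P s a s')\<bar>)"
      by (rule sum_abs)
    also have "\<dots> \<le> (\<Sum>s\<in>JS. \<Sum>a\<in>JA. \<bar>e s * (q s a * P s a s')\<bar>)"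
      by (intro sum_mono sum_abs)
    also have "\<dots> = (\<Sum>s\<in>JS. \<Sum>a\<in>JA. \<bar>e s\<bar> * q s a * P s a s')"
      using pol_nonneg[OF q] P_nonneg s' by (intro sum.cong refl) (auto simp: abs_mult)
    finally show ?thesis using gamma by (simp add: mult_left_mono)
  qed
  have ge0: "\<And>s. s \<in> JS \<Longrightarrow> \<bar>e s\<bar> \<ge> 0" by simp
  have "(\<Sum>s'\<in>JS. \<bar>e s'\<bar>) \<le> (\<Sum>s'\<in>JS. \<gamma> * (\<Sum>s\<in>JS. \<Sum>a\<in>JA. \<bar>e s\<bar> * q s a * P s a s'))"
    using ea by (rule sum_mono)
  also have "\<dots> = \<gamma> * (\<Sum>s'\<in>JS. \<Sum>s\<in>JS. \<Sum>a\<in>JA. \<bar>e s\<bar> * q s a * P s a s')"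
    by (simp add: sum_distrib_left)
  also have "\<dots> = \<gamma> * (\<Sum>s\<in>JS. \<bar>e s\<bar>)"
    using stoch_sum[OF q, of "\<lambda>s. \<bar>e s\<bar>"] by simp
  finally have "(1 - \<gamma>) * (\<Sum>s\<in>JS. \<bar>e s\<bar>) \<le> 0" by (simp add: algebra_simps)
  moreover have "(\<Sum>s\<in>JS. \<bar>e s\<bar>) \<ge> 0" by (rule sum_nonneg) simp
  moreover have "1 - \<gamma> > 0" using gamma by simp
  ultimately have "(\<Sum>s\<in>JS. \<bar>e s\<bar>) = 0"
    by (metis linorder_not_le mult_pos_pos order_antisym_conv)
  then have "\<bar>e s0\<bar> = 0" using sum_nonneg_eq_0_iff[OF finite_JS, of "\<lambda>s. \<bar>e s\<bar>"] s0 by simp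
  then show ?thesis unfolding e_def by simp
qed



lemma swap_outer3: "(\<Sum>i\<in>I. \<Sum>s\<in>S. \<Sum>a\<in>A. g i s a) = (\<Sum>s\<in>S. \<Sum>a\<in>A. \<Sum>i\<in>I. g i s a)"
proof -
  have "(\<Sum>i\<in>I. \<Sum>s\<in>S. \<Sum>a\<in>A. g i s a) = (\<Sum>s\<in>S. \<Sum>i\<in>I. \<Sum>a\<in>A. g i s a)"
    by (rule sum.swap)
  also have "\<dots> = (\<Sum>s\<in>S. \<Sum>a\<in>A. \<Sum>i\<in>I. g i s a)"
    by (rule sum.cong[OF refl], rule sum.swap)
  finally show ?thesis .
qed

lemma avg_perm:
  fixes f :: "nat \<Rightarrow> real"
  assumes n: "n < N"
  shows "(1 / fact N) * (\<Sum>\<sigma>\<in>{\<sigma>. \<sigma> permutes {..<N}}. f (\<sigma> n)) = (1 / real N) * (\<Sum>m<N. f m)"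
proof -
  let ?G = "{\<sigma>. \<sigma> permutes {..<N}}"
  define c where "c k = (\<Sum>\<sigma>\<in>?G. f (\<sigma> k))" for k
  have const: "c k = c n" if k: "k < N" for k
  proof -
    have tp: "Transposition.transpose k n permutes {..<N}" using k n by (intro permutes_swap_id) auto
    have "c k = (\<Sum>\<sigma>\<in>?G. f ((\<sigma> \<circ> Transposition.transpose k n) k))"
      unfolding c_def by (rule sum_permutations_compose_right[OF tp])
    also have "\<dots> = c n" unfolding c_def by simp
    finally show ?thesis .
  qed
  have "(\<Sum>k<N. c k) = (\<Sum>\<sigma>\<in>?G. \<Sum>k<N. f (\<sigma> k))"
    unfolding c_def by (rule sum.swap)
  also have "\<dots> = (\<Sum>\<sigma>\<in>?G. \<Sum>k<N. f k)"
    by (rule sum.cong[OF refl]) (auto intro: sum_perm)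
  also have "\<dots> = fact N * (\<Sum>k<N. f k)"
    using card_permutations[of "{..<N}" N] by simp
  finally have "real N * c n = fact N * (\<Sum>k<N. f k)"
    using const by simp
  moreover have "real N > 0" using n by simp
  moreover have "(fact N :: real) > 0" by simp
  ultimately show ?thesis unfolding c_def
    by (simp add: field_simps)
qed

end

locale symp = symw M for M :: "('s,'a) wcmdp" +
  fixes pi :: "(nat \<Rightarrow> 's) \<Rightarrow> (nat \<Rightarrow> 'a) \<Rightarrow> real"
  assumes pol: "is_policy M pi"
begin

abbreviation "G \<equiv> {\<sigma>. \<sigma> permutes {..<N}}"

definition "x s a = occ pi s * pi s a"
definition "xb s a = (1 / fact N) * (\<Sum>\<sigma>\<in>G. x (permute \<sigma> s) (permute \<sigma> a))"
definition "ub s = (\<Sum>a\<in>JA. xb s a)"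
definition "pi' s a = (if s \<in> JS \<and> a \<in> JA then (if ub s > 0 then xb s a / ub s else 1 / real (card JA)) else 0)"

lemma x_nonneg: "s \<in> JS \<Longrightarrow> x s a \<ge> 0"
  unfolding x_def using occ_nonneg[OF pol] pol_nonneg[OF pol] by simp

lemma xb_nonneg: "s \<in> JS \<Longrightarrow> xb s a \<ge> 0"
proof -
  assume s: "s \<in> JS"
  have "(\<Sum>\<sigma>\<in>G. x (permute \<sigma> s) (permute \<sigma> a)) \<ge> 0"
    using x_nonneg JS_perm s by (intro sum_nonneg) auto
  then show ?thesis unfolding xb_def by simp
qed

lemma ub_nonneg: "s \<in> JS \<Longrightarrow> ub s \<ge> 0"
  unfolding ub_def using xb_nonneg by (auto intro!: sum_nonneg)

lemma xb_inv: assumes "\<sigma> permutes {..<N}" shows "xb (permute \<sigma> s) (permute \<sigma> a) = xb s a"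
proof -
  have "(\<Sum>\<tau>\<in>G. x (permute \<tau> s) (permute \<tau> a)) = (\<Sum>\<tau>\<in>G. x (permute (\<sigma> \<circ> \<tau>) s) (permute (\<sigma> \<circ> \<tau>) a))"
    by (rule setum_permutations_compose_left[OF assms])
  then show ?thesis unfolding xb_def by (simp add: permute_comp)
qed

lemma ub_inv: assumes "\<sigma> permutes {..<N}" shows "ub (permute \<sigma> s) = ub s"
proof -
  have "ub (permute \<sigma> s) = (\<Sum>a\<in>JA. xb (permute \<sigma> s) (permute \<sigma> a))"
    unfolding ub_def by (rule sum_JA_perm[OF assms, symmetric])
  also have "\<dots> = ub s" unfolding ub_def using xb_inv[OF assms] by simp
  finally show ?thesis .
qed

lemma card_JA: "real (card JA) > 0" using finite_JA JA_ne by (simp add: card_gt_0_iff)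

lemma pi'_policy: "is_policy M pi'"
  unfolding is_policy_def
proof (intro ballI conjI allI impI)
  fix s a assume s: "s \<in> JS"
  show "pi' s a \<ge> 0" unfolding pi'_def using xb_nonneg[OF s] card_JA by auto
next
  fix s a assume "s \<in> JS" "a \<notin> JA" then show "pi' s a = 0" unfolding pi'_def by auto
next
  fix s assume s: "s \<in> JS"
  show "(\<Sum>a\<in>JA. pi' s a) = 1"
  proof (cases "ub s > 0")
    case True
    then have "(\<Sum>a\<in>JA. pi' s a) = (\<Sum>a\<in>JA. xb s a / ub s)" unfolding pi'_def using s by simp
    also have "\<dots> = ub s / ub s" unfolding ub_def by (simp only: sum_divide_distrib)
    finally show ?thesis using True by simp
  next
    case False
    then have "(\<Sum>a\<in>JA. pi' s a) = (\<Sum>a\<in>JA. 1 / real (card JA))" unfolding pi'_def using s by simp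
    then show ?thesis using card_JA by simp
  qed
qed

lemma pi'_inv: "perm_invariant M pi'"
  unfolding perm_invariant_def
proof (intro allI impI)
  fix \<sigma> s a assume \<sigma>: "\<sigma> permutes {..<N}"
  show "pi' s a = pi' (permute \<sigma> s) (permute \<sigma> a)"
    unfolding pi'_def JS_perm_iff[OF \<sigma>] JA_perm_iff[OF \<sigma>] xb_inv[OF \<sigma>] ub_inv[OF \<sigma>] ..
qed

lemma xb_eq: assumes "s \<in> JS" "a \<in> JA" shows "xb s a = ub s * pi' s a"
proof (cases "ub s > 0")
  case True then show ?thesis unfolding pi'_def using assms by simp
next
  case False
  then have "ub s = 0" using ub_nonneg[OF assms(1)] by simp
  then have "xb s a = 0" unfolding ub_def
    using sum_nonneg_eq_0_iff[OF finite_JA, of "xb s"] xb_nonneg[OF assms(1)] assms(2) by auto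
  then show ?thesis using \<open>ub s = 0\<close> by simp
qed

lemma flow_sigma: assumes \<sigma>: "\<sigma> permutes {..<N}" and s': "s' \<in> JS"
  shows "(\<Sum>a\<in>JA. x (permute \<sigma> s') (permute \<sigma> a))
       = init M s' + \<gamma> * (\<Sum>s\<in>JS. \<Sum>a\<in>JA. x (permute \<sigma> s) (permute \<sigma> a) * P s a s')"
proof -
  have ps': "permute \<sigma> s' \<in> JS" using JS_perm[OF \<sigma> s'] .
  have "(\<Sum>a\<in>JA. x (permute \<sigma> s') (permute \<sigma> a)) = (\<Sum>a\<in>JA. x (permute \<sigma> s') a)"
    by (rule sum_JA_perm[OF \<sigma>])
  also have "\<dots> = occ pi (permute \<sigma> s') * (\<Sum>a\<in>JA. pi (permute \<sigma> s') a)"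
    unfolding x_def by (simp add: sum_distrib_left)
  also have "\<dots> = occ pi (permute \<sigma> s')" using pol_sum[OF pol ps'] by simp
  also have "\<dots> = init M (permute \<sigma> s') + \<gamma> * (\<Sum>s\<in>JS. \<Sum>a\<in>JA. occ pi s * (pi s a * P s a (permute \<sigma> s')))"
    by (rule occ_flow[OF pol ps'])
  also have "init M (permute \<sigma> s') = init M s'" by (rule init_sym[OF \<sigma> s'])
  also have "(\<Sum>s\<in>JS. \<Sum>a\<in>JA. occ pi s * (pi s a * P s a (permute \<sigma> s')))
      = (\<Sum>s\<in>JS. \<Sum>a\<in>JA. occ pi (permute \<sigma> s) * (pi (permute \<sigma> s) a * P (permute \<sigma> s) a (permute \<sigma> s')))"
    by (rule sum_JS_perm[OF \<sigma>, symmetric])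
  also have "\<dots> = (\<Sum>s\<in>JS. \<Sum>a\<in>JA. occ pi (permute \<sigma> s) * (pi (permute \<sigma> s) (permute \<sigma> a) * P (permute \<sigma> s) (permute \<sigma> a) (permute \<sigma> s')))"
    by (rule sum.cong[OF refl], rule sum_JA_perm[OF \<sigma>, symmetric])
  also have "\<dots> = (\<Sum>s\<in>JS. \<Sum>a\<in>JA. x (permute \<sigma> s) (permute \<sigma> a) * P s a s')"
    unfolding x_def using P_perm[OF \<sigma> _ _ s'] by (intro sum.cong refl) simp
  finally show ?thesis .
qed

lemma ub_flow: assumes s': "s' \<in> JS"
  shows "ub s' = init M s' + \<gamma> * (\<Sum>s\<in>JS. \<Sum>a\<in>JA. ub s * (pi' s a * P s a s'))"
proof -
  have fG: "finite G" using finite_permutations[of "{..<N}"] by simp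
  have cG: "real (card G) = fact N" using card_permutations[of "{..<N}" N] by simp
  have fN: "(fact N :: real) \<noteq> 0" by simp
  have "ub s' = (1 / fact N) * (\<Sum>a\<in>JA. \<Sum>\<sigma>\<in>G. x (permute \<sigma> s') (permute \<sigma> a))"
    unfolding ub_def xb_def by (simp add: sum_distrib_left)
  also have "\<dots> = (1 / fact N) * (\<Sum>\<sigma>\<in>G. \<Sum>a\<in>JA. x (permute \<sigma> s') (permute \<sigma> a))"
    by (simp add: sum.swap[of _ JA])
  also have "\<dots> = (1 / fact N) * (\<Sum>\<sigma>\<in>G. init M s' + \<gamma> * (\<Sum>s\<in>JS. \<Sum>a\<in>JA. x (permute \<sigma> s) (permute \<sigma> a) * P s a s'))"
    using flow_sigma[OF _ s'] by simp
  also have "\<dots> = (1 / fact N) * (fact N * init M s') + \<gamma> * (\<Sum>s\<in>JS. \<Sum>a\<in>JA. ((1 / fact N) * (\<Sum>\<sigma>\<in>G. x (permute \<sigma> s) (permute \<sigma> a))) * P s a s')"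
    by (simp add: sum.distrib cG sum_distrib_left sum_distrib_right mult_ac distrib_left) (rule swap_outer3)
  also have "\<dots> = init M s' + \<gamma> * (\<Sum>s\<in>JS. \<Sum>a\<in>JA. xb s a * P s a s')"
    unfolding xb_def using fN by simp
  also have "(\<Sum>s\<in>JS. \<Sum>a\<in>JA. xb s a * P s a s') = (\<Sum>s\<in>JS. \<Sum>a\<in>JA. ub s * (pi' s a * P s a s'))"
    using xb_eq by (intro sum.cong refl) simp
  finally show ?thesis .
qed

lemma occ_pi': "s \<in> JS \<Longrightarrow> occ pi' s = ub s"
  by (rule uniq[OF pi'_policy]) (use occ_flow[OF pi'_policy] ub_flow in auto)

lemma val_sigma: assumes \<sigma>: "\<sigma> permutes {..<N}" and n: "n < N"
  shows "(\<Sum>s\<in>JS. \<Sum>a\<in>JA. x (permute \<sigma> s) (permute \<sigma> a) * rew M n (s n) (a n)) = value_vec M pi (inv \<sigma> n)"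
proof -
  have i\<sigma>: "inv \<sigma> permutes {..<N}" using permutes_inv[OF \<sigma>] .
  have m: "inv \<sigma> n < N" using perm_lt[OF i\<sigma> n] .
  have pinv: "permute (inv \<sigma>) s k = s (inv \<sigma> k)" for s :: "nat \<Rightarrow> 'b" and k by (simp add: permute_def)
  have "(\<Sum>s\<in>JS. \<Sum>a\<in>JA. x (permute \<sigma> s) (permute \<sigma> a) * rew M n (s n) (a n))
      = (\<Sum>s\<in>JS. \<Sum>a\<in>JA. x (permute \<sigma> (permute (inv \<sigma>) s)) (permute \<sigma> a) * rew M n (permute (inv \<sigma>) s n) (a n))"
    by (rule sum_JS_perm[OF i\<sigma>, symmetric])
  also have "\<dots> = (\<Sum>s\<in>JS. \<Sum>a\<in>JA. x (permute \<sigma> (permute (inv \<sigma>) s)) (permute \<sigma> (permute (inv \<sigma>) a)) * rew M n (permute (inv \<sigma>) s n) (permute (inv \<sigma>) a n))"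
    by (rule sum.cong[OF refl], rule sum_JA_perm[OF i\<sigma>, symmetric])
  also have "\<dots> = (\<Sum>s\<in>JS. \<Sum>a\<in>JA. x s a * rew M n (s (inv \<sigma> n)) (a (inv \<sigma> n)))"
    by (simp only: permute_inv_r[OF \<sigma>] pinv)
  also have "\<dots> = (\<Sum>s\<in>JS. \<Sum>a\<in>JA. occ pi s * (pi s a * rew M (inv \<sigma> n) (s (inv \<sigma> n)) (a (inv \<sigma> n))))"
  proof (intro sum.cong refl)
    fix s a assume s: "s \<in> JS" and a: "a \<in> JA"
    have sm: "s (inv \<sigma> n) \<in> St M 0" using JS_mem[OF s m] St_sym[OF m] by simp
    have am: "a (inv \<sigma> n) \<in> Ac M 0" using JA_mem[OF a m] Ac_sym[OF m] by simp
    show "x s a * rew M n (s (inv \<sigma> n)) (a (inv \<sigma> n)) = occ pi s * (pi s a * rew M (inv \<sigma> n) (s (inv \<sigma> n)) (a (inv \<sigma> n)))"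
      unfolding x_def using rew_sym[OF n sm am] rew_sym[OF m sm am] by simp
  qed
  also have "\<dots> = value_vec M pi (inv \<sigma> n)" by (rule value_occ[OF pol, symmetric])
  finally show ?thesis .
qed

lemma main_val: assumes n: "n < N"
  shows "value_vec M pi' n = (1 / real N) * (\<Sum>m<N. value_vec M pi m)"
proof -
  have "value_vec M pi' n = (\<Sum>s\<in>JS. \<Sum>a\<in>JA. xb s a * rew M n (s n) (a n))"
    unfolding value_occ[OF pi'_policy] using occ_pi' xb_eq by (intro sum.cong refl) simp
  also have "\<dots> = (1 / fact N) * (\<Sum>\<sigma>\<in>G. \<Sum>s\<in>JS. \<Sum>a\<in>JA. x (permute \<sigma> s) (permute \<sigma> a) * rew M n (s n) (a n))"
    unfolding xb_def by (simp add: sum_distrib_left sum_distrib_right mult_ac) (rule swap_outer3[symmetric])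
  also have "\<dots> = (1 / fact N) * (\<Sum>\<sigma>\<in>G. value_vec M pi (inv \<sigma> n))"
    using val_sigma[OF _ n] by simp
  also have "\<dots> = (1 / fact N) * (\<Sum>\<sigma>\<in>G. value_vec M pi (\<sigma> n))"
    using sum_permutations_inverse[of "\<lambda>\<sigma>. value_vec M pi (\<sigma> n)" "{..<N}"] by simp
  also have "\<dots> = (1 / real N) * (\<Sum>m<N. value_vec M pi m)"
    by (rule avg_perm[OF n])
  finally show ?thesis .
qed

end

theorem lemma3p1:
  fixes M :: "('s, 'a) wcmdp"
    and \<pi> :: "(nat \<Rightarrow> 's) \<Rightarrow> (nat \<Rightarrow> 'a) \<Rightarrow> real"
  assumes "wf_wcmdp M"
    and "symmetric_wcmdp M"
    and "is_policy M \<pi>"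
  shows "\<exists>\<pi>'. is_policy M \<pi>' \<and> perm_invariant M \<pi>' \<and>
           (\<forall>n<narms M. value_vec M \<pi>' n
              = (1 / real (narms M)) * (\<Sum>m<narms M. value_vec M \<pi> m))"
proof -
  interpret symp M \<pi> using assms by unfold_locales
  show ?thesis using pi'_policy pi'_inv main_val by blast
qed

end
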